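(* For any $A\subset\Omega$, if $\phi\in F_A$ then $\phi_\pi\in F_A$.
   Context: Let $\mathcal H$ be a complex Hilbert space. A projection is a bounded self-adjoint idempotent operator; $\wedge_\alpha p_\alpha$ is the projection onto the intersection of ranges. Let $S$ be a set; for each $t\in S$ let $\Gamma(t)$ be a countable set and for $a\in\Gamma(t)$ let $p^t_a$ be a projection on $\mathcal H$ with $\sum_{a\in\Gamma(t)}p^t_a=I$ (strong convergence). Let $\pi=\{p^t_a\}$ and $p^{t_1,\dots,t_k}_{a_1,\dots,a_k}=\wedge_{i=1}^kp^{t_i}_{a_i}$. $\pi$ commutes on $\phi$ if $W\phi=V\phi$ whenever $W,V$ are finite products of elements of $\pi$ with the same factors (with multiplicity) in possibly different orders; $\mathcal H_\pi$ is the closed subspace of such $\phi$, $p_\pi$ its projection, $\phi_\pi=p_\pi\phi$. Let $\Omega=\prod_{t\in S}\Gamma(t)$. For $A\subset\Omega$, $F_A=\{\phi\in\mathcal H:$ for every $\omega\in A$ there are $t_1,\dots,t_k\in S$ with $p^{t_1,\dots,t_k}_{\omega_{t_1},\dots,\omega_{t_k}}\phi=0\}$. *)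

theory Defs
  imports "HOL-Analysis.Analysis" "HOL-Library.Multiset"
begin

class complex_vector = real_vector +
  fixes scaleC :: "complex \<Rightarrow> 'a \<Rightarrow> 'a" (infixr "*\<^sub>C" 75)
  assumes scaleC_add_right: "a *\<^sub>C (x + y) = a *\<^sub>C x + a *\<^sub>C y"
    and scaleC_add_left: "(a + b) *\<^sub>C x = a *\<^sub>C x + b *\<^sub>C x"
    and scaleC_scaleC: "a *\<^sub>C (b *\<^sub>C x) = (a * b) *\<^sub>C x"
    and scaleC_one: "1 *\<^sub>C x = x"
    and scaleR_scaleC: "scaleR r x = complex_of_real r *\<^sub>C x"

class complex_normed_vector = complex_vector + real_normed_vector +
  assumes norm_scaleC: "norm (a *\<^sub>C x) = cmod a * norm x"

class complex_inner = complex_normed_vector +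
  fixes cinner :: "'a \<Rightarrow> 'a \<Rightarrow> complex"
  assumes cinner_add_left: "cinner (x + y) z = cinner x z + cinner y z"
    and cinner_scaleC_left: "cinner (a *\<^sub>C x) y = cnj a * cinner x y"
    and cinner_commute: "cinner x y = cnj (cinner y x)"
    and cinner_self_norm: "cinner x x = complex_of_real ((norm x)\<^sup>2)"

class chilbert_space = complex_inner + complete_space

definition bounded_clinear :: "('a::complex_normed_vector \<Rightarrow> 'b::complex_normed_vector) \<Rightarrow> bool" where
  "bounded_clinear f \<longleftrightarrow> bounded_linear f \<and> (\<forall>c x. f (c *\<^sub>C x) = c *\<^sub>C f x)"

definition is_projection :: "('h::chilbert_space \<Rightarrow> 'h) \<Rightarrow> bool" where
  "is_projection P \<longleftrightarrow> bounded_clinear P \<and> P \<circ> P = P \<and>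
     (\<forall>x y. cinner (P x) y = cinner x (P y))"

definition proj_onto :: "'h::chilbert_space set \<Rightarrow> ('h \<Rightarrow> 'h)" where
  "proj_onto M = (THE P. is_projection P \<and> range P = M)"

definition proj_meet :: "('h::chilbert_space \<Rightarrow> 'h) set \<Rightarrow> ('h \<Rightarrow> 'h)" where
  "proj_meet Ps = proj_onto (\<Inter>P\<in>Ps. range P)"

definition op_prod :: "('h \<Rightarrow> 'h) list \<Rightarrow> ('h \<Rightarrow> 'h)" where
  "op_prod ws = foldr (\<circ>) ws id"

definition commutes_on :: "('h \<Rightarrow> 'h) set \<Rightarrow> 'h \<Rightarrow> bool" where
  "commutes_on Pis \<phi> \<longleftrightarrow> (\<forall>ws vs. set ws \<subseteq> Pis \<longrightarrow> set vs \<subseteq> Pis \<longrightarrow> mset ws = mset vs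
       \<longrightarrow> op_prod ws \<phi> = op_prod vs \<phi>)"

definition H_pi :: "('h \<Rightarrow> 'h) set \<Rightarrow> 'h set" where
  "H_pi Pis = {\<phi>. commutes_on Pis \<phi>}"

definition p_pi :: "('h::chilbert_space \<Rightarrow> 'h) set \<Rightarrow> ('h \<Rightarrow> 'h)" where
  "p_pi Pis = proj_onto (H_pi Pis)"

definition pi_family :: "'t set \<Rightarrow> ('t \<Rightarrow> 'a set) \<Rightarrow> ('t \<Rightarrow> 'a \<Rightarrow> 'h \<Rightarrow> 'h) \<Rightarrow> ('h \<Rightarrow> 'h) set" where
  "pi_family S \<Gamma> p = {p t a | t a. t \<in> S \<and> a \<in> \<Gamma> t}"

definition Omega :: "'t set \<Rightarrow> ('t \<Rightarrow> 'a set) \<Rightarrow> ('t \<Rightarrow> 'a) set" where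
  "Omega S \<Gamma> = PiE S \<Gamma>"

definition F_set :: "'t set \<Rightarrow> ('t \<Rightarrow> 'a \<Rightarrow> 'h::chilbert_space \<Rightarrow> 'h) \<Rightarrow> ('t \<Rightarrow> 'a) set \<Rightarrow> 'h set" where
  "F_set S p A = {\<phi>. \<forall>\<omega>\<in>A. \<exists>ts. ts \<noteq> [] \<and> set ts \<subseteq> S \<and>
       proj_meet ((\<lambda>t. p t (\<omega> t)) ` set ts) \<phi> = 0}"

end

theory Submission imports Defs begin

lemma scaleC_zero_left': fixes x y :: "'v::complex_vector" shows "0 *\<^sub>C x = 0"
proof -
  have "0 *\<^sub>C x + 0 *\<^sub>C x = 0 *\<^sub>C x" using scaleC_add_left[of 0 0 x] by simp
  thus ?thesis by simp
qed
lemma scaleC_zero_right': fixes x y :: "'v::complex_vector" shows "a *\<^sub>C 0 = 0"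
proof -
  have "a *\<^sub>C 0 + a *\<^sub>C 0 = a *\<^sub>C 0" using scaleC_add_right[of a 0 0] by simp
  thus ?thesis by simp
qed
lemma scaleC_minus_right': fixes x y :: "'v::complex_vector" shows "a *\<^sub>C (- x) = - (a *\<^sub>C x)"
proof -
  have "a *\<^sub>C (- x) + a *\<^sub>C x = 0" using scaleC_add_right[of a "-x" x] by (simp add: scaleC_zero_right')
  thus ?thesis by (simp add: add_eq_0_iff2)
qed
lemma scaleC_diff_right': fixes x y :: "'v::complex_vector" shows "a *\<^sub>C (x - y) = a *\<^sub>C x - a *\<^sub>C y"
  using scaleC_add_right[of a x "-y"] by (simp add: scaleC_minus_right')

lemma cinner_add_right': fixes x y z :: "'v::complex_inner" shows "cinner x (y + z) = cinner x y + cinner x z"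
  using cinner_commute[of x "y+z"] cinner_commute[of x y] cinner_commute[of x z]
  by (simp add: cinner_add_left)
lemma cinner_scaleC_right': fixes x y z :: "'v::complex_inner" shows "cinner x (a *\<^sub>C y) = a * cinner x y"
  using cinner_commute[of x "a *\<^sub>C y"] cinner_commute[of x y]
  by (simp add: cinner_scaleC_left)
lemma cinner_zero_left': fixes x y z :: "'v::complex_inner" shows "cinner 0 y = 0"
proof -
  have "cinner 0 y + cinner 0 y = cinner 0 y" using cinner_add_left[of 0 0 y] by simp
  thus ?thesis by simp
qed
lemma cinner_zero_right': fixes x y z :: "'v::complex_inner" shows "cinner y 0 = 0"
  using cinner_commute[of y 0] by (simp add: cinner_zero_left')
lemma cinner_minus_left': fixes x y z :: "'v::complex_inner" shows "cinner (- x) y = - cinner x y"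
proof -
  have "cinner (- x) y + cinner x y = 0" using cinner_add_left[of "-x" x y] by (simp add: cinner_zero_left')
  thus ?thesis by (rule add_eq_0_iff2[THEN iffD1])
qed
lemma cinner_minus_right': fixes x y z :: "'v::complex_inner" shows "cinner y (- x) = - cinner y x"
  using cinner_commute[of y "-x"] cinner_commute[of y x] by (simp add: cinner_minus_left')
lemma cinner_diff_left': fixes x y z :: "'v::complex_inner" shows "cinner (x - y) z = cinner x z - cinner y z"
  using cinner_add_left[of x "-y" z] by (simp add: cinner_minus_left')
lemma cinner_diff_right': fixes x y z :: "'v::complex_inner" shows "cinner z (x - y) = cinner z x - cinner z y"
  using cinner_add_right'[of z x "-y"] by (simp add: cinner_minus_right')
lemma norm_sq_cinner: fixes x y z :: "'v::complex_inner" shows "(norm x)\<^sup>2 = Re (cinner x x)"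
  by (simp add: cinner_self_norm)
lemma cinner_self_eq_0': fixes x y z :: "'v::complex_inner" shows "cinner x x = 0 \<longleftrightarrow> x = 0"
  by (simp add: cinner_self_norm)

definition csubspace :: "'a::complex_vector set \<Rightarrow> bool" where
  "csubspace M \<longleftrightarrow> 0 \<in> M \<and> (\<forall>x\<in>M. \<forall>y\<in>M. x + y \<in> M) \<and> (\<forall>c. \<forall>x\<in>M. c *\<^sub>C x \<in> M)"

lemma csubspace_diff:
  assumes "csubspace M" "x \<in> M" "y \<in> M" shows "x - y \<in> M"
proof -
  have "(-1::complex) *\<^sub>C y \<in> M" using assms unfolding csubspace_def by blast
  moreover have "(-1::complex) *\<^sub>C y = - y"
    by (metis scaleR_minus1_left scaleR_scaleC of_real_1 of_real_minus)
  ultimately show ?thesis using assms unfolding csubspace_def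
    by (metis diff_conv_add_uminus)
qed

lemma csubspace_scaleR:
  assumes "csubspace M" "x \<in> M" shows "r *\<^sub>R x \<in> M"
  using assms unfolding csubspace_def by (simp add: scaleR_scaleC)

lemma cinner_expand:
  fixes x y :: "'a::complex_inner"
  shows "cinner (x + y) (x + y) = cinner x x + cinner x y + cinner y x + cinner y y"
  by (simp add: cinner_add_left cinner_add_right')

lemma parallelogram:
  fixes x y :: "'a::complex_inner"
  shows "(norm (x + y))\<^sup>2 + (norm (x - y))\<^sup>2 = 2 * (norm x)\<^sup>2 + 2 * (norm y)\<^sup>2"
  by (simp add: norm_sq_cinner cinner_add_left cinner_add_right' cinner_diff_left' cinner_diff_right')

lemma min_imp_orth:
  fixes x m :: "'a::complex_inner"
  assumes M: "csubspace M" and m: "m \<in> M" and min: "\<And>w. w \<in> M \<Longrightarrow> norm (x - m) \<le> norm (x - w)"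
    and y: "y \<in> M"
  shows "cinner (x - m) y = 0"
proof (cases "y = 0")
  case True thus ?thesis by (simp add: cinner_zero_right')
next
  case False
  define z where "z = x - m"
  define c where "c = cinner z y"
  define N where "N = (norm y)\<^sup>2"
  have N: "N > 0" using False by (simp add: N_def)
  define t where "t = cnj c / complex_of_real N"
  have yy: "cinner y z = cnj c" unfolding c_def by (metis cinner_commute)
  have "m + t *\<^sub>C y \<in> M" using M m y unfolding csubspace_def by blast
  hence "norm z \<le> norm (z - t *\<^sub>C y)" using min[of "m + t *\<^sub>C y"] unfolding z_def
    by (simp add: algebra_simps)
  hence le: "(norm z)\<^sup>2 \<le> (norm (z - t *\<^sub>C y))\<^sup>2" by (simp add: power_mono)
  have "cinner (z - t *\<^sub>C y) (z - t *\<^sub>C y) = cinner z z - t * c - cnj t * cnj c + cnj t * t * complex_of_real N"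
  proof -
    have "cinner (z - t *\<^sub>C y) (z - t *\<^sub>C y) = cinner z z - t * cinner z y - cnj t * cinner y z + cnj t * t * cinner y y"
      by (simp add: cinner_diff_left' cinner_diff_right' cinner_scaleC_left cinner_scaleC_right' algebra_simps)
    moreover have "cinner y y = complex_of_real N" unfolding N_def by (rule cinner_self_norm)
    ultimately show ?thesis using yy unfolding c_def by simp
  qed
  also have "\<dots> = cinner z z - c * cnj c / complex_of_real N"
    using N unfolding t_def by (simp add: field_simps)
  also have "c * cnj c / complex_of_real N = complex_of_real ((cmod c)\<^sup>2 / N)"
    by (simp add: complex_norm_square[symmetric])
  finally have "cinner (z - t *\<^sub>C y) (z - t *\<^sub>C y) = cinner z z - complex_of_real ((cmod c)\<^sup>2 / N)" .
  hence "(norm (z - t *\<^sub>C y))\<^sup>2 = (norm z)\<^sup>2 - (cmod c)\<^sup>2 / N"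
    by (simp add: norm_sq_cinner)
  with le N have "(cmod c)\<^sup>2 / N \<le> 0" by linarith
  with N have "cmod c = 0"
    by (smt (verit, best) divide_pos_pos zero_less_power norm_ge_zero zero_less_norm_iff power_eq_0_iff)
  thus ?thesis by (simp add: c_def z_def)
qed


lemma exists_min:
  fixes x :: "'a::chilbert_space"
  assumes M: "csubspace M" and cl: "closed M"
  shows "\<exists>m\<in>M. \<forall>w\<in>M. norm (x - m) \<le> norm (x - w)"
proof -
  define D where "D = (\<lambda>w. norm (x - w)) ` M"
  define d where "d = Inf D"
  have ne: "D \<noteq> {}" using M unfolding D_def csubspace_def by auto
  have bdd: "bdd_below D" unfolding D_def by (rule bdd_belowI[of _ 0]) auto
  have dle: "d \<le> norm (x - w)" if "w \<in> M" for w
    unfolding d_def using bdd that by (auto intro: cInf_lower simp: D_def)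
  have d0: "0 \<le> d" unfolding d_def using ne by (auto intro: cInf_greatest simp: D_def)
  have "\<exists>w\<in>M. (norm (x - w))\<^sup>2 < d\<^sup>2 + inverse (real (Suc n))" for n
  proof -
    have "d < sqrt (d\<^sup>2 + inverse (real (Suc n)))"
      by (intro real_less_rsqrt) simp
    then obtain v where "v \<in> D" "v < sqrt (d\<^sup>2 + inverse (real (Suc n)))"
      using cInf_lessD[OF ne] unfolding d_def by blast
    then obtain w where w: "w \<in> M" "norm (x - w) < sqrt (d\<^sup>2 + inverse (real (Suc n)))"
      unfolding D_def by auto
    hence "(norm (x - w))\<^sup>2 < (sqrt (d\<^sup>2 + inverse (real (Suc n))))\<^sup>2"
      by (intro power_strict_mono) auto
    hence "(norm (x - w))\<^sup>2 < d\<^sup>2 + inverse (real (Suc n))"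
      by simp
    with w show ?thesis by blast
  qed
  then obtain f where f: "\<And>n. f n \<in> M" "\<And>n. (norm (x - f n))\<^sup>2 < d\<^sup>2 + inverse (real (Suc n))"
    by metis
  have key: "(norm (f n - f k))\<^sup>2 \<le> 2 * inverse (real (Suc n)) + 2 * inverse (real (Suc k))" for n k
  proof -
    have mid: "(1/2) *\<^sub>R (f n + f k) \<in> M"
      using M f(1) by (intro csubspace_scaleR) (auto simp: csubspace_def)
    have "2 * d \<le> 2 * norm (x - (1/2) *\<^sub>R (f n + f k))" using dle[OF mid] by simp
    also have "\<dots> = norm ((x - f n) + (x - f k))"
    proof -
      have "(x - f n) + (x - f k) = 2 *\<^sub>R (x - (1/2) *\<^sub>R (f n + f k))"
        by (simp add: algebra_simps scaleR_2)
      thus ?thesis by simp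
    qed
    finally have a0: "2 * d \<le> norm ((x - f n) + (x - f k))" .
    have a: "(2 * d)\<^sup>2 \<le> (norm ((x - f n) + (x - f k)))\<^sup>2"
      by (rule power_mono[OF a0]) (use d0 in simp)
    have b: "(norm ((x - f n) + (x - f k)))\<^sup>2 + (norm ((x - f n) - (x - f k)))\<^sup>2
       = 2 * (norm (x - f n))\<^sup>2 + 2 * (norm (x - f k))\<^sup>2" by (rule parallelogram)
    have c: "norm ((x - f n) - (x - f k)) = norm (f n - f k)"
    proof -
      have "(x - f n) - (x - f k) = f k - f n" by simp
      thus ?thesis by (simp add: norm_minus_commute)
    qed
    show ?thesis using a b c f(2)[of n] f(2)[of k] by (simp add: power_mult_distrib)
  qed
  have "Cauchy f"
  proof (rule metric_CauchyI)
    fix e :: real assume e: "e > 0"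
    obtain N where N: "inverse (real (Suc N)) < e\<^sup>2 / 4"
      using reals_Archimedean[of "e\<^sup>2 / 4"] e by auto
    show "\<exists>N. \<forall>m\<ge>N. \<forall>n\<ge>N. dist (f m) (f n) < e"
    proof (intro exI allI impI)
      fix m n assume mn: "N \<le> m" "N \<le> n"
      have im: "inverse (real (Suc m)) \<le> inverse (real (Suc N))"
        using mn by (simp add: le_imp_inverse_le)
      have inn: "inverse (real (Suc n)) \<le> inverse (real (Suc N))"
        using mn by (simp add: le_imp_inverse_le)
      have "(norm (f m - f n))\<^sup>2 < e\<^sup>2" using key[of m n] im inn N by linarith
      hence "norm (f m - f n) < e" using e by (simp add: power_less_imp_less_base)
      thus "dist (f m) (f n) < e" by (simp add: dist_norm)
    qed
  qed
  then obtain m where lim: "f \<longlonglongrightarrow> m" using Cauchy_convergent convergent_def by blast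
  have mM: "m \<in> M" using closed_sequentially[OF cl f(1) lim] .
  have l1: "(\<lambda>n. (norm (x - f n))\<^sup>2) \<longlonglongrightarrow> (norm (x - m))\<^sup>2"
    by (intro tendsto_intros lim)
  have l2: "(\<lambda>n. d\<^sup>2 + inverse (real (Suc n))) \<longlonglongrightarrow> d\<^sup>2 + 0"
    by (intro tendsto_intros LIMSEQ_inverse_real_of_nat)
  have ev: "\<exists>N. \<forall>n\<ge>N. (norm (x - f n))\<^sup>2 \<le> d\<^sup>2 + inverse (real (Suc n))"
  proof (intro exI allI impI)
    fix n :: nat show "(norm (x - f n))\<^sup>2 \<le> d\<^sup>2 + inverse (real (Suc n))"
      using f(2)[of n] by (rule less_imp_le)
  qed
  have "(norm (x - m))\<^sup>2 \<le> d\<^sup>2 + 0"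
    by (rule LIMSEQ_le[OF l1 l2 ev])
  hence "(norm (x - m))\<^sup>2 \<le> d\<^sup>2" by simp
  hence nd: "norm (x - m) \<le> d" by (rule power2_le_imp_le) (rule d0)
  show ?thesis
  proof (intro bexI[of _ m] ballI)
    fix w assume "w \<in> M"
    from nd dle[OF this] show "norm (x - m) \<le> norm (x - w)" by (rule order_trans)
  qed (rule mM)
qed


lemma bl_facts:
  fixes P :: "'a::real_normed_vector \<Rightarrow> 'b::real_normed_vector"
  assumes "bounded_linear P"
  shows "P (x + y) = P x + P y" "P (x - y) = P x - P y" "P 0 = 0"
  using assms by (simp_all add: linear_add linear_diff linear_0 bounded_linear.linear)

definition orthp :: "'a::complex_inner set \<Rightarrow> 'a \<Rightarrow> 'a \<Rightarrow> bool" where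
  "orthp M x m \<longleftrightarrow> m \<in> M \<and> (\<forall>y\<in>M. cinner (x - m) y = 0)"

lemma orthp_unique:
  assumes M: "csubspace M" and a: "orthp M x m1" and b: "orthp M x m2"
  shows "m1 = m2"
proof -
  have d: "m2 - m1 \<in> M" using a b M by (auto simp: orthp_def intro: csubspace_diff)
  have "m2 - m1 = (x - m1) - (x - m2)" by simp
  hence "cinner (m2 - m1) (m2 - m1) = cinner (x - m1) (m2 - m1) - cinner (x - m2) (m2 - m1)"
    by (metis cinner_diff_left')
  also have "\<dots> = 0" using a b d by (simp add: orthp_def)
  finally show ?thesis by (simp add: cinner_self_eq_0')
qed

lemma orthp_exists:
  fixes x :: "'a::chilbert_space"
  assumes M: "csubspace M" and cl: "closed M"
  shows "\<exists>m. orthp M x m"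
proof -
  obtain m where m: "m \<in> M" and mn: "\<forall>w\<in>M. norm (x - m) \<le> norm (x - w)"
    using exists_min[OF M cl, of x] by blast
  have "\<forall>y\<in>M. cinner (x - m) y = 0"
  proof
    fix y assume "y \<in> M"
    show "cinner (x - m) y = 0" by (rule min_imp_orth[OF M m _ \<open>y \<in> M\<close>]) (use mn in blast)
  qed
  with m show ?thesis unfolding orthp_def by blast
qed

lemma projection_orthp:
  assumes P: "is_projection P"
  shows "orthp (range P) x (P x)"
proof -
  have bl: "bounded_linear P" using P by (simp add: is_projection_def bounded_clinear_def)
  have idem: "P (P z) = P z" for z using P by (simp add: is_projection_def fun_eq_iff)
  have "cinner (x - P x) (P v) = 0" for v
  proof -
    have "cinner (x - P x) (P v) = cinner (P (x - P x)) v"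
      using P by (simp add: is_projection_def)
    also have "P (x - P x) = 0" by (simp add: bl_facts[OF bl] idem)
    finally show ?thesis by (simp add: cinner_zero_left')
  qed
  thus ?thesis unfolding orthp_def by auto
qed

definition prj :: "'a::complex_inner set \<Rightarrow> 'a \<Rightarrow> 'a" where
  "prj M x = (SOME m. orthp M x m)"

lemma prj_orthp:
  fixes x :: "'a::chilbert_space"
  assumes M: "csubspace M" and cl: "closed M"
  shows "orthp M x (prj M x)"
  unfolding prj_def using orthp_exists[OF M cl] by (rule someI_ex)

lemma prj_eq:
  fixes x :: "'a::chilbert_space"
  assumes M: "csubspace M" and cl: "closed M" and o: "orthp M x m"
  shows "prj M x = m"
  using orthp_unique[OF M prj_orthp[OF M cl] o] .

lemma prj_is_projection:
  fixes M :: "'a::chilbert_space set"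
  assumes M: "csubspace M" and cl: "closed M"
  shows "is_projection (prj M) \<and> range (prj M) = M"
proof -
  note o = prj_orthp[OF M cl]
  have inM: "prj M x \<in> M" for x using o[of x] by (simp add: orthp_def)
  have orth: "y \<in> M \<Longrightarrow> cinner (x - prj M x) y = 0" for x y using o[of x] by (simp add: orthp_def)
  have orth2: "y \<in> M \<Longrightarrow> cinner y (x - prj M x) = 0" for x y
    by (metis cinner_commute complex_cnj_zero orth)
  have add: "prj M (x + y) = prj M x + prj M y" for x y
  proof (rule prj_eq[OF M cl])
    show "orthp M (x + y) (prj M x + prj M y)"
    proof -
      have e: "(x + y) - (prj M x + prj M y) = (x - prj M x) + (y - prj M y)" by simp
      have "prj M x + prj M y \<in> M" using M inM by (simp add: csubspace_def)
      moreover have "\<forall>w\<in>M. cinner ((x + y) - (prj M x + prj M y)) w = 0"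
        unfolding e by (simp add: cinner_add_left orth)
      ultimately show ?thesis unfolding orthp_def by blast
    qed
  qed
  have smul: "prj M (c *\<^sub>C x) = c *\<^sub>C prj M x" for c x
  proof (rule prj_eq[OF M cl])
    show "orthp M (c *\<^sub>C x) (c *\<^sub>C prj M x)"
    proof -
      have e: "c *\<^sub>C x - c *\<^sub>C prj M x = c *\<^sub>C (x - prj M x)" by (simp add: scaleC_diff_right')
      have "c *\<^sub>C prj M x \<in> M" using M inM by (simp add: csubspace_def)
      moreover have "\<forall>w\<in>M. cinner (c *\<^sub>C x - c *\<^sub>C prj M x) w = 0"
        unfolding e by (simp add: cinner_scaleC_left orth)
      ultimately show ?thesis unfolding orthp_def by blast
    qed
  qed
  have nrm: "norm (prj M x) \<le> norm x" for x
  proof -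
    have "cinner x x = cinner (prj M x + (x - prj M x)) (prj M x + (x - prj M x))" by simp
    also have "\<dots> = cinner (prj M x) (prj M x) + cinner (x - prj M x) (x - prj M x)"
      unfolding cinner_expand using orth[OF inM] orth2[OF inM] by simp
    finally have "(norm x)\<^sup>2 = (norm (prj M x))\<^sup>2 + (norm (x - prj M x))\<^sup>2"
      by (simp add: norm_sq_cinner)
    hence "(norm (prj M x))\<^sup>2 \<le> (norm x)\<^sup>2" by simp
    thus ?thesis by (rule power2_le_imp_le) simp
  qed
  have bl: "bounded_linear (prj M)"
  proof (rule bounded_linear_intro[where K=1])
    show "prj M (x + y) = prj M x + prj M y" for x y by (rule add)
    show "prj M (r *\<^sub>R x) = r *\<^sub>R prj M x" for r x by (simp only: scaleR_scaleC smul)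
    show "norm (prj M x) \<le> norm x * 1" for x using nrm[of x] by simp
  qed
  have fixp: "m \<in> M \<Longrightarrow> prj M m = m" for m
    by (rule prj_eq[OF M cl]) (simp add: orthp_def cinner_zero_left')
  have idem: "prj M \<circ> prj M = prj M" using fixp inM by (simp add: fun_eq_iff)
  have sa: "cinner (prj M x) y = cinner x (prj M y)" for x y
  proof -
    have a: "cinner (prj M x) y = cinner (prj M x) (prj M y)"
      using cinner_add_right'[of "prj M x" "prj M y" "y - prj M y"] orth2[of "prj M x" y, OF inM] by simp
    have b: "cinner x (prj M y) = cinner (prj M x) (prj M y)"
      using cinner_add_left[of "prj M x" "x - prj M x" "prj M y"] orth[of "prj M y" x, OF inM] by simp
    show ?thesis by (simp only: a b)
  qed
  have rng: "range (prj M) = M"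
  proof
    show "range (prj M) \<subseteq> M" using inM by blast
    show "M \<subseteq> range (prj M)"
    proof
      fix m assume "m \<in> M"
      hence "m = prj M m" using fixp by simp
      thus "m \<in> range (prj M)" by (rule range_eqI)
    qed
  qed
  show ?thesis using bl smul idem sa rng
    by (simp add: is_projection_def bounded_clinear_def)
qed

lemma proj_onto_works:
  fixes M :: "'a::chilbert_space set"
  assumes M: "csubspace M" and cl: "closed M"
  shows "is_projection (proj_onto M) \<and> range (proj_onto M) = M"
proof -
  have "proj_onto M = prj M"
    unfolding proj_onto_def
  proof (rule the_equality)
    show "is_projection (prj M) \<and> range (prj M) = M" by (rule prj_is_projection[OF M cl])
    fix P assume P: "is_projection P \<and> range P = M"
    show "P = prj M"
    proof
      fix x show "P x = prj M x"
        using prj_eq[OF M cl, of x "P x"] projection_orthp[of P x] P by simp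
    qed
  qed
  thus ?thesis using prj_is_projection[OF M cl] by simp
qed


lemma proj_bl: "is_projection P \<Longrightarrow> bounded_linear P"
  by (simp add: is_projection_def bounded_clinear_def)
lemma proj_idem: "is_projection P \<Longrightarrow> P (P x) = P x"
  by (simp add: is_projection_def fun_eq_iff)
lemma proj_sa: "is_projection P \<Longrightarrow> cinner (P x) y = cinner x (P y)"
  by (simp add: is_projection_def)
lemma proj_range: "is_projection P \<Longrightarrow> x \<in> range P \<longleftrightarrow> P x = x"
  by (metis proj_idem rangeE rangeI)

lemma proj_range_closed: "is_projection P \<Longrightarrow> closed (range P)"
proof -
  assume P: "is_projection P"
  have "range P = {x. P x = x}" using proj_range[OF P] by auto
  moreover have "closed {x. P x = x}"
    by (rule closed_Collect_eq) (auto intro: linear_continuous_on proj_bl[OF P] continuous_on_id)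
  ultimately show ?thesis by simp
qed

lemma proj_range_csub: "is_projection P \<Longrightarrow> csubspace (range P)"
proof -
  assume P: "is_projection P"
  have bl: "bounded_linear P" by (rule proj_bl[OF P])
  have sc: "P (c *\<^sub>C x) = c *\<^sub>C P x" for c x using P by (simp add: is_projection_def bounded_clinear_def)
  show ?thesis unfolding csubspace_def
    by (auto simp: image_iff) (metis bl_facts(3)[OF bl], metis bl_facts(1)[OF bl], metis sc)
qed

lemma proj_zero_if_orth:
  assumes P: "is_projection P" and o: "cinner z (P z) = 0"
  shows "P z = 0"
proof -
  have "cinner (P z) (P z) = cinner z (P (P z))" by (rule proj_sa[OF P])
  also have "\<dots> = 0" using o by (simp add: proj_idem[OF P])
  finally show ?thesis by (simp add: cinner_self_eq_0')
qed

lemma op_prod_Cons: "op_prod (q # ws) = q \<circ> op_prod ws"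
  by (simp add: op_prod_def)

lemma foldr_comp: "foldr (\<circ>) ws g = foldr (\<circ>) ws id \<circ> g"
  by (induction ws) auto

lemma op_prod_snoc: "op_prod (ws @ [q]) = op_prod ws \<circ> q"
  unfolding op_prod_def by (simp add: foldr_comp[of ws q])

lemma op_prod_bc:
  assumes "\<forall>q\<in>Pis. bounded_clinear q" "set ws \<subseteq> Pis"
  shows "bounded_clinear (op_prod ws)"
  using assms(2)
proof (induction ws)
  case Nil
  show ?case by (simp add: op_prod_def bounded_clinear_def id_def)
next
  case (Cons q ws)
  hence q: "bounded_clinear q" and ih: "bounded_clinear (op_prod ws)" using assms(1) by auto
  show ?case using q ih unfolding op_prod_Cons bounded_clinear_def
    by (auto simp: comp_def intro: bounded_linear_compose)
qed

lemma H_pi_closed_csub: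
  fixes Pis :: "('h::chilbert_space \<Rightarrow> 'h) set"
  assumes bc: "\<forall>q\<in>Pis. bounded_clinear q"
  shows "closed (H_pi Pis) \<and> csubspace (H_pi Pis)"
proof
  have "closed {\<phi>. set ws \<subseteq> Pis \<longrightarrow> set vs \<subseteq> Pis \<longrightarrow> mset ws = mset vs
       \<longrightarrow> op_prod ws \<phi> = op_prod vs \<phi>}" for ws vs
  proof (cases "set ws \<subseteq> Pis \<and> set vs \<subseteq> Pis \<and> mset ws = mset vs")
    case True
    hence "bounded_linear (op_prod ws)" "bounded_linear (op_prod vs)"
      using op_prod_bc[OF bc] by (auto simp: bounded_clinear_def)
    hence "closed {\<phi>. op_prod ws \<phi> = op_prod vs \<phi>}"
      by (intro closed_Collect_eq linear_continuous_on)
    thus ?thesis using True by simp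
  qed simp
  hence "closed {\<phi>. \<forall>ws vs. set ws \<subseteq> Pis \<longrightarrow> set vs \<subseteq> Pis \<longrightarrow> mset ws = mset vs
       \<longrightarrow> op_prod ws \<phi> = op_prod vs \<phi>}"
    by (intro closed_Collect_all)
  thus "closed (H_pi Pis)" by (simp add: H_pi_def commutes_on_def)
next
  have bcs: "set ws \<subseteq> Pis \<Longrightarrow> bounded_clinear (op_prod ws)" for ws using op_prod_bc[OF bc] .
  have hz: "0 \<in> H_pi Pis"
    unfolding H_pi_def commutes_on_def
  proof (intro CollectI allI impI)
    fix ws vs :: "('h \<Rightarrow> 'h) list"
    assume "set ws \<subseteq> Pis" "set vs \<subseteq> Pis" "mset ws = mset vs"
    then show "op_prod ws 0 = op_prod vs 0"
      using bcs[of ws] bcs[of vs] by (simp add: bounded_clinear_def bl_facts)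
  qed
  have ha: "x + y \<in> H_pi Pis" if hx: "x \<in> H_pi Pis" and hy: "y \<in> H_pi Pis" for x y
    unfolding H_pi_def commutes_on_def
  proof (intro CollectI allI impI)
    fix ws vs :: "('h \<Rightarrow> 'h) list"
    assume a: "set ws \<subseteq> Pis" "set vs \<subseteq> Pis" "mset ws = mset vs"
    have "op_prod ws x = op_prod vs x" using hx a unfolding H_pi_def commutes_on_def by blast
    moreover have "op_prod ws y = op_prod vs y" using hy a unfolding H_pi_def commutes_on_def by blast
    ultimately show "op_prod ws (x + y) = op_prod vs (x + y)"
      using bcs[of ws] bcs[of vs] a by (simp add: bounded_clinear_def bl_facts)
  qed
  have hs: "c *\<^sub>C x \<in> H_pi Pis" if hx: "x \<in> H_pi Pis" for x c
    unfolding H_pi_def commutes_on_def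
  proof (intro CollectI allI impI)
    fix ws vs :: "('h \<Rightarrow> 'h) list"
    assume a: "set ws \<subseteq> Pis" "set vs \<subseteq> Pis" "mset ws = mset vs"
    have "op_prod ws x = op_prod vs x" using hx a unfolding H_pi_def commutes_on_def by blast
    then show "op_prod ws (c *\<^sub>C x) = op_prod vs (c *\<^sub>C x)"
      using bcs[of ws] bcs[of vs] a by (simp add: bounded_clinear_def)
  qed
  show "csubspace (H_pi Pis)" unfolding csubspace_def using hz ha hs by blast
qed


lemma cs0: "csubspace M \<Longrightarrow> 0 \<in> M" by (simp add: csubspace_def)
lemma csadd: "csubspace M \<Longrightarrow> x \<in> M \<Longrightarrow> y \<in> M \<Longrightarrow> x + y \<in> M" by (simp add: csubspace_def)
lemma cssc: "csubspace M \<Longrightarrow> x \<in> M \<Longrightarrow> c *\<^sub>C x \<in> M" by (simp add: csubspace_def)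
lemma csI: "0 \<in> M \<Longrightarrow> (\<And>x y. x \<in> M \<Longrightarrow> y \<in> M \<Longrightarrow> x + y \<in> M) \<Longrightarrow> (\<And>c x. x \<in> M \<Longrightarrow> c *\<^sub>C x \<in> M) \<Longrightarrow> csubspace M"
  by (simp add: csubspace_def)

lemma csubspace_INT:
  assumes "\<And>i. i \<in> I \<Longrightarrow> csubspace (F i)"
  shows "csubspace (\<Inter>i\<in>I. F i)"
proof (rule csI)
  show "0 \<in> (\<Inter>i\<in>I. F i)"
  proof (rule INT_I)
    fix i assume "i \<in> I"
    thus "0 \<in> F i" by (rule cs0[OF assms])
  qed
  show "x + y \<in> (\<Inter>i\<in>I. F i)" if x: "x \<in> (\<Inter>i\<in>I. F i)" and y: "y \<in> (\<Inter>i\<in>I. F i)" for x y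
  proof (rule INT_I)
    fix i assume i: "i \<in> I"
    show "x + y \<in> F i" by (rule csadd[OF assms[OF i] INT_D[OF x i] INT_D[OF y i]])
  qed
  show "c *\<^sub>C x \<in> (\<Inter>i\<in>I. F i)" if x: "x \<in> (\<Inter>i\<in>I. F i)" for x c
  proof (rule INT_I)
    fix i assume i: "i \<in> I"
    show "c *\<^sub>C x \<in> F i" by (rule cssc[OF assms[OF i] INT_D[OF x i]])
  qed
qed

lemma p_pi_commute:
  fixes Pis :: "('h::chilbert_space \<Rightarrow> 'h) set"
  assumes allp: "\<forall>q\<in>Pis. is_projection q" and q: "q \<in> Pis"
  shows "p_pi Pis (q x) = q (p_pi Pis x)"
proof -
  have bc: "\<forall>q\<in>Pis. bounded_clinear q" using allp by (simp add: is_projection_def)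
  have H: "closed (H_pi Pis) \<and> csubspace (H_pi Pis)" by (rule H_pi_closed_csub[OF bc])
  define P where "P = p_pi Pis"
  have P: "is_projection P" and rP: "range P = H_pi Pis"
    using proj_onto_works[of "H_pi Pis"] H unfolding P_def p_pi_def by auto
  have qp: "is_projection q" using allp q by blast
  have inv: "h \<in> H_pi Pis \<Longrightarrow> q h \<in> H_pi Pis" for h
  proof -
    assume h: "h \<in> H_pi Pis"
    show ?thesis unfolding H_pi_def commutes_on_def
    proof (clarsimp)
      fix ws vs assume a: "set ws \<subseteq> Pis" "set vs \<subseteq> Pis" "mset ws = mset vs"
      have c: "commutes_on Pis h" using h unfolding H_pi_def by simp
      have "set (ws @ [q]) \<subseteq> Pis" "set (vs @ [q]) \<subseteq> Pis" "mset (ws @ [q]) = mset (vs @ [q])"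
        using a q by auto
      hence "op_prod (ws @ [q]) h = op_prod (vs @ [q]) h"
        using c unfolding commutes_on_def by blast
      thus "op_prod ws (q h) = op_prod vs (q h)" by (simp add: op_prod_snoc)
    qed
  qed
  have blP: "bounded_linear P" and blq: "bounded_linear q" using proj_bl P qp by auto
  define a where "a = P x"
  define b where "b = x - P x"
  have x: "x = a + b" unfolding a_def b_def by simp
  have "a \<in> range P" unfolding a_def by (rule rangeI)
  hence "a \<in> H_pi Pis" using rP by simp
  hence "q a \<in> H_pi Pis" by (rule inv)
  hence "q a \<in> range P" using rP by simp
  hence Pa: "P (q a) = q a" using proj_range[OF P] by simp
  have Pb: "P (q b) = 0"
  proof (rule proj_zero_if_orth[OF P])
    have s1: "cinner (q b) (P (q b)) = cinner b (q (P (q b)))" by (rule proj_sa[OF qp])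
    have "P (q b) \<in> range P" by (rule rangeI)
    hence "P (q b) \<in> H_pi Pis" using rP by simp
    hence "q (P (q b)) \<in> H_pi Pis" by (rule inv)
    hence "q (P (q b)) \<in> range P" using rP by simp
    then obtain v where v: "q (P (q b)) = P v" by auto
    have "cinner b (P v) = 0" using projection_orthp[OF P, of x] unfolding orthp_def b_def by auto
    thus "cinner (q b) (P (q b)) = 0" using v s1 by simp
  qed
  have "P (q x) = P (q a) + P (q b)" unfolding x by (simp add: bl_facts[OF blP] bl_facts[OF blq])
  also have "\<dots> = q a" using Pa Pb by simp
  finally show ?thesis unfolding P_def a_def .
qed

lemma main_aux:
  fixes Pis :: "('h::chilbert_space \<Rightarrow> 'h) set"
  assumes allp: "\<forall>q\<in>Pis. is_projection q" and Qs: "Qs \<subseteq> Pis"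
    and phi: "proj_meet Qs \<phi> = 0"
  shows "proj_meet Qs (p_pi Pis \<phi>) = 0"
proof -
  have bc: "\<forall>q\<in>Pis. bounded_clinear q" using allp by (simp add: is_projection_def)
  have H: "closed (H_pi Pis) \<and> csubspace (H_pi Pis)" by (rule H_pi_closed_csub[OF bc])
  define P where "P = p_pi Pis"
  have P: "is_projection P"
    using proj_onto_works[of "H_pi Pis"] H unfolding P_def p_pi_def by auto
  define M where "M = (\<Inter>q\<in>Qs. range q)"
  have Mcl: "closed M" unfolding M_def using allp Qs by (intro closed_INT) (auto intro: proj_range_closed)
  have rc: "csubspace (range q)" if "q \<in> Qs" for q
    using that allp Qs proj_range_csub by blast
  have Mcs: "csubspace M" unfolding M_def by (rule csubspace_INT) (rule rc)
  define Q where "Q = proj_meet Qs"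
  have Q: "is_projection Q" and rQ: "range Q = M"
    using proj_onto_works[OF Mcs Mcl] unfolding Q_def proj_meet_def M_def by auto
  have PM: "y \<in> M \<Longrightarrow> P y \<in> M" for y
  proof -
    assume y: "y \<in> M"
    { fix q assume qQ: "q \<in> Qs"
      hence qp: "is_projection q" and qP: "q \<in> Pis" using allp Qs by auto
      have "q y = y" using y qQ proj_range[OF qp] unfolding M_def by auto
      hence "q (P y) = P y" using p_pi_commute[OF allp qP, of y] unfolding P_def by simp
      hence "P y \<in> range q" using proj_range[OF qp] by simp }
    thus ?thesis unfolding M_def by auto
  qed
  define u where "u = Q (P \<phi>)"
  have uM: "u \<in> M" unfolding u_def using rQ by auto
  have PuM: "P u \<in> M" using PM[OF uM] .
  have QPu: "Q (P u) = P u" using PuM rQ proj_range[OF Q] by auto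
  have "cinner u u = cinner (P \<phi>) (Q u)" unfolding u_def by (rule proj_sa[OF Q])
  also have "Q u = u" unfolding u_def by (rule proj_idem[OF Q])
  also have "cinner (P \<phi>) u = cinner \<phi> (P u)" by (rule proj_sa[OF P])
  also have "\<dots> = cinner \<phi> (Q (P u))" using QPu by simp
  also have "\<dots> = cinner (Q \<phi>) (P u)" by (rule proj_sa[OF Q, symmetric])
  also have "\<dots> = 0" using phi unfolding Q_def by (simp add: cinner_zero_left')
  finally have "u = 0" by (simp add: cinner_self_eq_0')
  thus ?thesis unfolding u_def Q_def P_def .
qed

theorem lemma1:
  fixes S :: "'t set" and \<Gamma> :: "'t \<Rightarrow> 'a set"
    and p :: "'t \<Rightarrow> 'a \<Rightarrow> 'h::chilbert_space \<Rightarrow> 'h"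
    and A :: "('t \<Rightarrow> 'a) set" and \<phi> :: 'h
  assumes countable: "\<And>t. t \<in> S \<Longrightarrow> countable (\<Gamma> t)"
    and proj: "\<And>t a. t \<in> S \<Longrightarrow> a \<in> \<Gamma> t \<Longrightarrow> is_projection (p t a)"
    and sum_id: "\<And>t x. t \<in> S \<Longrightarrow> ((\<lambda>a. p t a x) has_sum x) (\<Gamma> t)"
    and A_sub: "A \<subseteq> Omega S \<Gamma>"
    and phi: "\<phi> \<in> F_set S p A"
  shows "p_pi (pi_family S \<Gamma> p) \<phi> \<in> F_set S p A"
proof -
  have allp: "\<forall>q\<in>pi_family S \<Gamma> p. is_projection q"
    unfolding pi_family_def using proj by blast
  show ?thesis unfolding F_set_def
  proof (clarify)
    fix \<omega> assume w: "\<omega> \<in> A"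
    then obtain ts where ts: "ts \<noteq> []" "set ts \<subseteq> S"
      "proj_meet ((\<lambda>t. p t (\<omega> t)) ` set ts) \<phi> = 0"
      using phi unfolding F_set_def by blast
    have wO: "\<omega> \<in> PiE S \<Gamma>" using w A_sub unfolding Omega_def by blast
    have sub: "(\<lambda>t. p t (\<omega> t)) ` set ts \<subseteq> pi_family S \<Gamma> p"
      using ts(2) wO unfolding pi_family_def by (auto simp: PiE_iff)
    show "\<exists>ts. ts \<noteq> [] \<and> set ts \<subseteq> S \<and>
        proj_meet ((\<lambda>t. p t (\<omega> t)) ` set ts) (p_pi (pi_family S \<Gamma> p) \<phi>) = 0"
      using ts main_aux[OF allp sub ts(3)] by blast
  qed
qed

end
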